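(* For $a>0$ and $m>0$, $$\int_{0}^{1}\frac{\left(a^2-\log^2x\right)\tanh^{-1}(x^m)}{x\left(a^2+\log^2x\right)^2}\,dx=\frac14\left(-m\,\psi\!\left(\frac{am}{2\pi}+1\right)+m\,\psi\!\left(\frac{am+\pi}{2\pi}\right)+\frac{\pi}{a}\right).$$
   Context: $\psi=\Gamma'/\Gamma$ is the digamma function. *)

theory Defs
  imports "HOL-Analysis.Analysis"
begin

end

theory Submission
  imports Defs "HOL-Real_Asymp.Real_Asymp"
begin

lemma exp_int:
  fixes b :: real assumes b: "b > 0"
  shows "set_integrable lborel {0<..} (\<lambda>s. exp (- b * s))"
    and "(LINT s:{0<..}|lborel. exp (- b * s)) = 1 / b"
proof -
  let ?F = "\<lambda>s. - exp (- b * s) / b"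
  have lim: "(?F \<longlongrightarrow> 0) at_top"
    using b by real_asymp
  have *: "set_integrable lborel (einterval 0 \<infinity>) (\<lambda>s. exp (- b * s))"
       "(LBINT s=0..\<infinity>. exp (- b * s)) = 0 - (- 1 / b)"
    by (rule interval_integral_FTC_nonneg[where F="?F"];
        use b lim in \<open>auto intro!: derivative_eq_intros tendsto_eq_intros simp: ereal_tendsto_simps zero_ereal_def\<close>)+
  show "set_integrable lborel {0<..} (\<lambda>s. exp (- b * s))" using *(1) by (simp add: zero_ereal_def)
  show "(LINT s:{0<..}|lborel. exp (- b * s)) = 1 / b" using *(2)
    by (simp add: zero_ereal_def interval_integral_to_infinity_eq)
qed


lemma lap_pos:
  fixes a :: real assumes a: "a > 0"
  shows "set_integrable lborel {0<..} (\<lambda>s. s * exp (- a * s))"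
    and "(LINT s:{0<..}|lborel. s * exp (- a * s)) = 1 / a\<^sup>2"
proof -
  let ?F = "\<lambda>s. - (s / a + 1 / a\<^sup>2) * exp (- a * s)"
  have lim: "(?F \<longlongrightarrow> 0) at_top"
    using a by real_asymp
  have d: "(?F has_real_derivative s * exp (- a * s)) (at s)" for s
    using a by (auto intro!: derivative_eq_intros simp: field_simps power2_eq_square)
  have *: "set_integrable lborel (einterval 0 \<infinity>) (\<lambda>s. s * exp (- a * s))"
       "(LBINT s=0..\<infinity>. s * exp (- a * s)) = 0 - (- 1 / a\<^sup>2)"
    by (rule interval_integral_FTC_nonneg[where F="?F"];
        use a lim d in \<open>auto intro!: tendsto_eq_intros simp: ereal_tendsto_simps zero_ereal_def\<close>)+
  show "set_integrable lborel {0<..} (\<lambda>s. s * exp (- a * s))" using *(1) by (simp add: zero_ereal_def)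
  show "(LINT s:{0<..}|lborel. s * exp (- a * s)) = 1 / a\<^sup>2" using *(2)
    by (simp add: zero_ereal_def interval_integral_to_infinity_eq)
qed

lemma bdd_mult_zero:
  fixes h u :: "real \<Rightarrow> real"
  assumes "(h \<longlongrightarrow> 0) F" "\<And>x. \<bar>u x\<bar> \<le> 1"
  shows "((\<lambda>x. u x * h x) \<longlongrightarrow> 0) F"
proof (rule Lim_null_comparison)
  show "\<forall>\<^sub>F x in F. norm (u x * h x) \<le> \<bar>h x\<bar>"
    using assms(2) by (auto simp: abs_mult intro!: always_eventually mult_left_le_one_le)
  show "((\<lambda>x. \<bar>h x\<bar>) \<longlongrightarrow> 0) F" using tendsto_rabs_zero[OF assms(1)] .
qed

lemma lap_cos:
  fixes a L :: real assumes a: "a > 0"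
  shows "set_integrable lborel {0<..} (\<lambda>s. s * exp (- a * s) * cos (s * L))"
    and "(LINT s:{0<..}|lborel. s * exp (- a * s) * cos (s * L)) = (a\<^sup>2 - L\<^sup>2) / (a\<^sup>2 + L\<^sup>2)\<^sup>2"
proof -
  define D where "D = a\<^sup>2 + L\<^sup>2"
  have D: "D > 0" using a by (simp add: D_def add_pos_nonneg)
  show int: "set_integrable lborel {0<..} (\<lambda>s. s * exp (- a * s) * cos (s * L))"
    apply (rule set_integrable_bound[OF lap_pos(1)[OF a]])
    subgoal unfolding set_borel_measurable_def by measurable
    by (auto simp: abs_mult intro!: mult_left_le)
  define P where "P = L / D"
  define Q where "Q = 2 * a * L / D\<^sup>2"
  define R where "R = a / D"
  define T where "T = (a\<^sup>2 - L\<^sup>2) / D\<^sup>2"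
  have e1: "-a*P + L*R = 0" unfolding P_def R_def by (simp add: field_simps)
  have Dn: "D \<noteq> 0" using D by simp
  have e2: "-a*Q + P + L*T = 0" unfolding P_def Q_def T_def using Dn
    by (simp add: field_simps power2_eq_square) (simp add: D_def power2_eq_square algebra_simps)
  have e3: "a*R + L*P = 1" unfolding P_def R_def using Dn
    by (simp add: field_simps power2_eq_square) (simp add: D_def power2_eq_square algebra_simps)
  have e4: "a*T + L*Q - R = 0" unfolding T_def Q_def R_def using Dn
    by (simp add: field_simps power2_eq_square) (simp add: D_def power2_eq_square algebra_simps)
  let ?F = "\<lambda>s. sin (s * L) * (exp (- a * s) * (s * P + Q))
                 - cos (s * L) * (exp (- a * s) * (s * R + T))"
  have lim: "(?F \<longlongrightarrow> 0) at_top"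
  proof -
    have "((\<lambda>s. exp (- a * s) * (s * P + Q)) \<longlongrightarrow> 0) at_top"
         "((\<lambda>s. exp (- a * s) * (s * R + T)) \<longlongrightarrow> 0) at_top"
      using a by real_asymp+
    from tendsto_diff[OF bdd_mult_zero[OF this(1)] bdd_mult_zero[OF this(2)]]
    show ?thesis by simp
  qed
  have d: "(?F has_vector_derivative s * exp (- a * s) * cos (s * L)) (at s)" for s
  proof -
    have "(?F has_real_derivative
       exp (- a * s) * (sin (s * L) * (s * (-a*P + L*R) + (-a*Q + P + L*T))
          + cos (s * L) * (s * (a*R + L*P) + (a*T + L*Q - R)))) (at s)"
      apply (rule derivative_eq_intros refl | simp)+
      by algebra
    thus ?thesis unfolding has_real_derivative_iff_has_vector_derivative[symmetric] e1 e2 e3 e4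
      by (simp add: mult_ac)
  qed
  have *: "(LBINT s=0..\<infinity>. s * exp (- a * s) * cos (s * L)) = 0 - ?F 0"
    by (rule interval_integral_FTC_integrable[where F="?F"];
        use a lim d int in \<open>auto intro!: tendsto_eq_intros simp: ereal_tendsto_simps zero_ereal_def\<close>)
  show "(LINT s:{0<..}|lborel. s * exp (- a * s) * cos (s * L)) = (a\<^sup>2 - L\<^sup>2) / (a\<^sup>2 + L\<^sup>2)\<^sup>2" 
    using * D by (simp add: zero_ereal_def interval_integral_to_infinity_eq T_def D_def)
qed

lemma mel_pos:
  fixes c :: real assumes c: "c > 0"
  shows "set_integrable lborel {0<..<1} (\<lambda>x. x powr (c - 1))"
    and "(LINT x:{0<..<1}|lborel. x powr (c - 1)) = 1 / c"
proof -
  let ?F = "\<lambda>x. x powr c / c"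
  have lim: "(?F \<longlongrightarrow> 0) (at_right 0)"
    using c by real_asymp
  have lim1: "(?F \<longlongrightarrow> 1 / c) (at_left 1)"
    using c by (auto intro!: tendsto_eq_intros)
  have d: "(?F has_real_derivative x powr (c - 1)) (at x)" if "0 < x" for x
    using c that by (auto intro!: derivative_eq_intros simp: field_simps powr_diff)
  have *: "set_integrable lborel (einterval 0 1) (\<lambda>x. x powr (c - 1))"
       "(LBINT x=0..1. x powr (c - 1)) = 1 / c - 0"
    by (rule interval_integral_FTC_nonneg[where F="?F"];
        use c lim lim1 d in \<open>auto intro!: continuous_intros simp: ereal_tendsto_simps zero_ereal_def one_ereal_def\<close>)+
  show "set_integrable lborel {0<..<1} (\<lambda>x. x powr (c - 1))" using *(1) by (simp add: zero_ereal_def one_ereal_def)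
  show "(LINT x:{0<..<1}|lborel. x powr (c - 1)) = 1 / c" using *(2)
    by (simp add: zero_ereal_def one_ereal_def interval_integral_Ioo)
qed

lemma mel_cos:
  fixes c s :: real assumes c: "c > 0"
  shows "set_integrable lborel {0<..<1} (\<lambda>x. x powr (c - 1) * cos (s * ln x))"
    and "(LINT x:{0<..<1}|lborel. x powr (c - 1) * cos (s * ln x)) = c / (c\<^sup>2 + s\<^sup>2)"
proof -
  define D where "D = c\<^sup>2 + s\<^sup>2"
  have D: "D > 0" using c by (simp add: D_def add_pos_nonneg)
  show int: "set_integrable lborel {0<..<1} (\<lambda>x. x powr (c - 1) * cos (s * ln x))"
    apply (rule set_integrable_bound[OF mel_pos(1)[OF c]])
    subgoal unfolding set_borel_measurable_def by measurable
    by (auto simp: abs_mult intro!: mult_left_le)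
  let ?F = "\<lambda>x. cos (s * ln x) * (x powr c * (c / D)) + sin (s * ln x) * (x powr c * (s / D))"
  have lim: "(?F \<longlongrightarrow> 0) (at_right 0)"
  proof -
    have "((\<lambda>x. x powr c * (c / D)) \<longlongrightarrow> 0) (at_right 0)"
         "((\<lambda>x. x powr c * (s / D)) \<longlongrightarrow> 0) (at_right 0)"
      using c by real_asymp+
    from tendsto_add[OF bdd_mult_zero[OF this(1)] bdd_mult_zero[OF this(2)]]
    show ?thesis by simp
  qed
  have lim1: "(?F \<longlongrightarrow> c / D) (at_left 1)"
    using c D by (auto intro!: tendsto_eq_intros)
  have d: "(?F has_vector_derivative x powr (c - 1) * cos (s * ln x)) (at x)" if x: "0 < x" for x
  proof -
    have p: "((\<lambda>x. x powr c) has_real_derivative c * x powr (c - 1)) (at x)"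
      using x by (rule has_real_derivative_powr)
    have co: "((\<lambda>x. cos (s * ln x)) has_real_derivative - sin (s * ln x) * (s / x)) (at x)"
      using x by (auto intro!: derivative_eq_intros)
    have si: "((\<lambda>x. sin (s * ln x)) has_real_derivative cos (s * ln x) * (s / x)) (at x)"
      using x by (auto intro!: derivative_eq_intros)
    have "(?F has_real_derivative
        (- sin (s * ln x) * (s / x)) * (x powr c * (c / D)) + (c * x powr (c - 1) * (c / D)) * cos (s * ln x)
      + ((cos (s * ln x) * (s / x)) * (x powr c * (s / D)) + (c * x powr (c - 1) * (s / D)) * sin (s * ln x))) (at x)"
      by (intro DERIV_add DERIV_mult co si DERIV_cmult_right p)
    moreover have "(- sin (s * ln x) * (s / x)) * (x powr c * (c / D)) + (c * x powr (c - 1) * (c / D)) * cos (s * ln x)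
      + ((cos (s * ln x) * (s / x)) * (x powr c * (s / D)) + (c * x powr (c - 1) * (s / D)) * sin (s * ln x))
      = x powr (c - 1) * cos (s * ln x)"
    proof -
      have xc: "x powr c = x * x powr (c - 1)" using x by (simp add: powr_mult_base)
      show ?thesis unfolding xc using x D
        by (simp add: field_simps) (simp add: D_def power2_eq_square algebra_simps)
    qed
    ultimately show ?thesis unfolding has_real_derivative_iff_has_vector_derivative[symmetric]
      by simp
  qed
  have *: "(LBINT x=0..1. x powr (c - 1) * cos (s * ln x)) = c / D - 0"
    by (rule interval_integral_FTC_integrable[where F="?F"];
        use c lim lim1 d int in \<open>auto intro!: continuous_intros simp: ereal_tendsto_simps zero_ereal_def one_ereal_def\<close>)
  show "(LINT x:{0<..<1}|lborel. x powr (c - 1) * cos (s * ln x)) = c / (c\<^sup>2 + s\<^sup>2)"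
    using * by (simp add: zero_ereal_def one_ereal_def interval_integral_Ioo D_def)
qed


lemma fub:
  fixes a c :: real assumes a: "a > 0" and c: "c > 0"
  shows "(LINT x:{0<..<1}|lborel. x powr (c - 1) * ((a\<^sup>2 - (ln x)\<^sup>2) / (a\<^sup>2 + (ln x)\<^sup>2)\<^sup>2))
       = (LINT s:{0<..}|lborel. s * exp (- a * s) * (c / (c\<^sup>2 + s\<^sup>2)))"
proof -
  define g where "g s x = indicator {0<..} s * indicator {0<..<1} x * (s * exp (- a * s) * cos (s * ln x) * x powr (c - 1))" for s x :: real
  define h where "h s x = indicator {0<..} s * indicator {0<..<1} x * (s * exp (- a * s) * x powr (c - 1))" for s x :: real
  have gm[measurable]: "case_prod g \<in> borel_measurable (lborel \<Otimes>\<^sub>M lborel)"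
    unfolding g_def by measurable
  have hm[measurable]: "case_prod h \<in> borel_measurable (lborel \<Otimes>\<^sub>M lborel)"
    unfolding h_def by measurable
  have hin: "(\<integral>x. h s x \<partial>lborel) = indicator {0<..} s * (s * exp (- a * s)) * (1 / c)" for s
  proof -
    have "(\<integral>x. h s x \<partial>lborel) = indicator {0<..} s * (s * exp (- a * s)) * (\<integral>x. indicator {0<..<1} x * x powr (c - 1) \<partial>lborel)"
    proof -
      have "(\<integral>x. h s x \<partial>lborel) = (\<integral>x. (indicator {0<..} s * (s * exp (- a * s))) * (indicator {0<..<1} x * x powr (c - 1)) \<partial>lborel)"
        by (rule Bochner_Integration.integral_cong) (simp_all add: h_def mult_ac)
      then show ?thesis by (simp only: integral_mult_right_zero)
    qed
    also have "(\<integral>x. indicator {0<..<1} x * x powr (c - 1) \<partial>lborel) = 1 / c"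
      using mel_pos(2)[OF c] by (simp add: set_lebesgue_integral_def)
    finally show ?thesis .
  qed
  have hint: "integrable (lborel \<Otimes>\<^sub>M lborel) (case_prod h)"
  proof (rule lborel_pair.Fubini_integrable)
    show "case_prod h \<in> borel_measurable (lborel \<Otimes>\<^sub>M lborel)" by (rule hm)
    have "(\<integral>y. norm (case_prod h (s, y)) \<partial>lborel) = (\<integral>x. h s x \<partial>lborel)" for s
      by (intro Bochner_Integration.integral_cong) (auto simp: h_def indicator_def)
    then show "integrable lborel (\<lambda>s. \<integral>y. norm (case_prod h (s, y)) \<partial>lborel)"
      using lap_pos(1)[OF a] by (simp add: hin set_integrable_def)
    show "AE s in lborel. integrable lborel (\<lambda>y. case_prod h (s, y))"
    proof (rule AE_I2)
      fix s
      have "integrable lborel (\<lambda>y. (indicator {0<..} s * (s * exp (- a * s))) * (indicator {0<..<1} y * y powr (c - 1)))"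
        using mel_pos(1)[OF c] by (simp add: set_integrable_def)
      then show "integrable lborel (\<lambda>y. case_prod h (s, y))"
        by (rule Bochner_Integration.integrable_cong[THEN iffD1, rotated -1]) (simp_all add: h_def mult_ac)
    qed
  qed
  have gint: "integrable (lborel \<Otimes>\<^sub>M lborel) (case_prod g)"
    by (rule Bochner_Integration.integrable_bound[OF hint gm])
       (auto simp: g_def h_def indicator_def abs_mult intro!: mult_left_le)
  have "(\<integral>x. (\<integral>s. g s x \<partial>lborel) \<partial>lborel) = (\<integral>s. (\<integral>x. g s x \<partial>lborel) \<partial>lborel)"
    by (rule lborel_pair.Fubini_integral[OF gint])
  also have "(\<lambda>s. \<integral>x. g s x \<partial>lborel) = (\<lambda>s. indicator {0<..} s * (s * exp (- a * s) * (c / (c\<^sup>2 + s\<^sup>2))))"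
  proof
    fix s
    have "(\<integral>x. g s x \<partial>lborel) = indicator {0<..} s * (s * exp (- a * s)) * (\<integral>x. indicator {0<..<1} x * (x powr (c - 1) * cos (s * ln x)) \<partial>lborel)"
    proof -
      have "(\<integral>x. g s x \<partial>lborel) = (\<integral>x. (indicator {0<..} s * (s * exp (- a * s))) * (indicator {0<..<1} x * (x powr (c - 1) * cos (s * ln x))) \<partial>lborel)"
        by (rule Bochner_Integration.integral_cong) (simp_all add: g_def mult_ac)
      then show ?thesis by (simp only: integral_mult_right_zero)
    qed
    also have "(\<integral>x. indicator {0<..<1} x * (x powr (c - 1) * cos (s * ln x)) \<partial>lborel) = c / (c\<^sup>2 + s\<^sup>2)"
      using mel_cos(2)[OF c, of s] by (simp add: set_lebesgue_integral_def)
    finally show "(\<integral>x. g s x \<partial>lborel) = indicator {0<..} s * (s * exp (- a * s) * (c / (c\<^sup>2 + s\<^sup>2)))" by simp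
  qed
  also have "(\<lambda>x. \<integral>s. g s x \<partial>lborel) = (\<lambda>x. indicator {0<..<1} x * (x powr (c - 1) * ((a\<^sup>2 - (ln x)\<^sup>2) / (a\<^sup>2 + (ln x)\<^sup>2)\<^sup>2)))"
  proof
    fix x
    have "(\<integral>s. g s x \<partial>lborel) = indicator {0<..<1} x * x powr (c - 1) * (\<integral>s. indicator {0<..} s * (s * exp (- a * s) * cos (s * ln x)) \<partial>lborel)"
    proof -
      have "(\<integral>s. g s x \<partial>lborel) = (\<integral>s. (indicator {0<..<1} x * x powr (c - 1)) * (indicator {0<..} s * (s * exp (- a * s) * cos (s * ln x))) \<partial>lborel)"
        by (rule Bochner_Integration.integral_cong) (simp_all add: g_def mult_ac)
      then show ?thesis by (simp only: integral_mult_right_zero)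
    qed
    also have "(\<integral>s. indicator {0<..} s * (s * exp (- a * s) * cos (s * ln x)) \<partial>lborel) = (a\<^sup>2 - (ln x)\<^sup>2) / (a\<^sup>2 + (ln x)\<^sup>2)\<^sup>2"
      using lap_cos(2)[OF a, of "ln x"] by (simp add: set_lebesgue_integral_def)
    finally show "(\<integral>s. g s x \<partial>lborel) = indicator {0<..<1} x * (x powr (c - 1) * ((a\<^sup>2 - (ln x)\<^sup>2) / (a\<^sup>2 + (ln x)\<^sup>2)\<^sup>2))" by simp
  qed
  finally show ?thesis by (simp add: set_lebesgue_integral_def)
qed


lemma artanh_series:
  fixes y :: real assumes y: "0 \<le> y" "y < 1"
  shows "(\<lambda>j. y ^ (2 * j + 1) / real (2 * j + 1)) sums artanh y"
proof -
  have s1: "(\<lambda>n. - ((- y) ^ n) / real n) sums ln (1 + y)"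
    using y by (intro ln_series') auto
  have s2: "(\<lambda>n. - ((- (- y)) ^ n) / real n) sums ln (1 + (- y))"
    using y by (intro ln_series') auto
  define f where "f n = (- ((- y) ^ n) / real n - - ((- (- y)) ^ n) / real n) / 2" for n
  have "f sums ((ln (1 + y) - ln (1 + (- y))) / 2)"
    unfolding f_def by (intro sums_divide sums_diff s1 s2)
  also have "(ln (1 + y) - ln (1 + (- y))) / 2 = artanh y"
    using y by (simp add: artanh_def ln_div)
  finally have "(\<lambda>j. sum f {j * 2..<j * 2 + 2}) sums artanh y"
    by (rule sums_group) simp
  moreover have "sum f {j * 2..<j * 2 + 2} = y ^ (2 * j + 1) / real (2 * j + 1)" for j
  proof -
    have "{j * 2..<j * 2 + 2} = {2 * j, 2 * j + 1}" by auto
    moreover have "f (2 * j) = 0" unfolding f_def by simp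
    moreover have "f (2 * j + 1) = y ^ (2 * j + 1) / real (2 * j + 1)"
    proof -
      have "(- y) ^ (2 * j + 1) = - (y ^ (2 * j + 1))" by (simp add: power_minus_odd)
      have "f (2 * j + 1) = (y ^ (2 * j + 1) / real (2 * j + 1) + y ^ (2 * j + 1) / real (2 * j + 1)) / 2"
        unfolding f_def using \<open>(- y) ^ (2 * j + 1) = - (y ^ (2 * j + 1))\<close> by (simp del: power_Suc of_nat_Suc)
      moreover have hh: "(A + A) / 2 = A" for A :: real by simp
      ultimately show ?thesis by (simp only: hh)
    qed
    ultimately show ?thesis by simp
  qed
  ultimately show ?thesis by simp
qed


lemma Digamma_refl:
  fixes z :: complex
  assumes z1: "z \<notin> \<int>\<^sub>\<le>\<^sub>0" and z2: "1 - z \<notin> \<int>\<^sub>\<le>\<^sub>0" and sz: "sin (of_real pi * z) \<noteq> 0"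
  shows "Digamma (1 - z) - Digamma z = of_real pi * cos (of_real pi * z) / sin (of_real pi * z)"
proof -
  have eq: "(\<lambda>w. rGamma w * rGamma (1 - w)) = (\<lambda>w::complex. sin (of_real pi * w) / of_real pi)"
    using rGamma_reflection_complex by blast
  have r1: "(rGamma has_field_derivative - rGamma z * Digamma z) (at z)"
    using has_field_derivative_rGamma_complex'[of z UNIV] z1 by simp
  have r2: "(rGamma has_field_derivative - rGamma (1 - z) * Digamma (1 - z)) (at (1 - z))"
    using has_field_derivative_rGamma_complex'[of "1 - z" UNIV] z2 by simp
  have d1: "((\<lambda>w. rGamma w * rGamma (1 - w)) has_field_derivative
      (- rGamma z * Digamma z) * rGamma (1 - z) + (- rGamma (1 - z) * Digamma (1 - z) * (- 1)) * rGamma z) (at z)"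
    apply (rule DERIV_mult[OF r1])
    apply (rule DERIV_chain2[where g="\<lambda>w. 1 - w" and x=z, OF r2])
    apply (auto intro!: derivative_eq_intros)
    done
  have d2: "((\<lambda>w::complex. sin (of_real pi * w) / of_real pi) has_field_derivative cos (of_real pi * z)) (at z)"
    by (auto intro!: derivative_eq_intros)
  from d1 have "((\<lambda>w::complex. sin (of_real pi * w) / of_real pi) has_field_derivative
      (- rGamma z * Digamma z) * rGamma (1 - z) + (- rGamma (1 - z) * Digamma (1 - z) * (- 1)) * rGamma z) (at z)"
    by (simp only: eq)
  from DERIV_unique[OF this d2]
  have "rGamma z * rGamma (1 - z) * (Digamma (1 - z) - Digamma z) = cos (of_real pi * z)"
    by (simp add: algebra_simps)
  also have "rGamma z * rGamma (1 - z) = sin (of_real pi * z) / of_real pi"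
    using rGamma_reflection_complex by blast
  finally show ?thesis using sz by (simp add: field_simps)
qed


lemma mittag_complex:
  fixes y :: real assumes y: "y > 0"
  defines "E \<equiv> exp (pi * y)"
  shows "(\<lambda>k. 2 * y / ((real k + 1/2)\<^sup>2 + y\<^sup>2)) sums (pi * (E - inverse E) / (E + inverse E))"
proof -
  define z where "z = complex_of_real (1/2) + \<i> * complex_of_real y"
  have Imz: "Im z = y" "Re z = 1/2" by (simp_all add: z_def)
  have notint: "w \<notin> \<int>\<^sub>\<le>\<^sub>0" if "Im w \<noteq> 0" for w :: complex
    using that by (auto elim!: nonpos_Ints_cases)
  have z1: "z \<notin> \<int>\<^sub>\<le>\<^sub>0" by (rule notint) (use y Imz in simp)
  have z2: "1 - z \<notin> \<int>\<^sub>\<le>\<^sub>0" by (rule notint) (use y Imz in simp)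
  have pz: "complex_of_real pi * z = complex_of_real (pi / 2) + \<i> * complex_of_real (pi * y)"
    by (simp add: z_def algebra_simps)
  have sinz: "sin (complex_of_real pi * z) = complex_of_real ((E + inverse E) / 2)"
    unfolding pz sin_add cos_of_real sin_of_real E_def cosh_real by simp
  have cosz: "cos (complex_of_real pi * z) = - (\<i> * complex_of_real ((E - inverse E) / 2))"
    unfolding pz cos_add cos_of_real sin_of_real E_def sin_i_times by (simp add: exp_of_real flip: of_real_mult)
  have Epos: "E > 0" unfolding E_def by simp
  have EE: "E + inverse E > 0" using Epos by (simp add: add_pos_pos)
  have sz: "sin (complex_of_real pi * z) \<noteq> 0"
    unfolding sinz of_real_eq_0_iff using EE by simp
  have refl: "Digamma (1 - z) - Digamma z = - (\<i> * complex_of_real (pi * (E - inverse E) / (E + inverse E)))"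
    unfolding Digamma_refl[OF z1 z2 sz] sinz cosz using EE
    by (simp add: field_simps flip: of_real_add)
  have zn: "z \<noteq> 0" "1 - z \<noteq> 0" using y Imz by auto
  have s1: "(\<lambda>k. inverse (of_nat (Suc k)) - inverse (z + of_nat k)) sums (Digamma z + euler_mascheroni)"
    using summable_Digamma[OF zn(1)] by (simp add: Digamma_def summable_sums)
  have s2: "(\<lambda>k. inverse (of_nat (Suc k)) - inverse ((1 - z) + of_nat k)) sums (Digamma (1 - z) + euler_mascheroni)"
    using summable_Digamma[OF zn(2)] by (simp add: Digamma_def summable_sums)
  from sums_diff[OF s1 s2]
  have "(\<lambda>k. inverse ((1 - z) + of_nat k) - inverse (z + of_nat k)) sums (Digamma z - Digamma (1 - z))"
    by simp
  also have "Digamma z - Digamma (1 - z) = \<i> * complex_of_real (pi * (E - inverse E) / (E + inverse E))"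
    using refl by (simp add: algebra_simps)
  finally have s3: "(\<lambda>k. inverse ((1 - z) + of_nat k) - inverse (z + of_nat k)) sums
       (\<i> * complex_of_real (pi * (E - inverse E) / (E + inverse E)))" .
  have trm: "inverse ((1 - z) + of_nat k) - inverse (z + of_nat k) = \<i> * complex_of_real (2 * y / ((real k + 1/2)\<^sup>2 + y\<^sup>2))" for k
  proof -
    have pos: "(real k + 1/2)\<^sup>2 + y\<^sup>2 > 0" using y by (simp add: add_pos_pos)
    show ?thesis using pos
      by (simp add: complex_eq_iff z_def inverse_eq_divide Re_divide Im_divide power2_eq_square field_simps)
  qed
  from s3 have "(\<lambda>k. (- \<i>) * (\<i> * complex_of_real (2 * y / ((real k + 1/2)\<^sup>2 + y\<^sup>2)))) sums
       ((- \<i>) * (\<i> * complex_of_real (pi * (E - inverse E) / (E + inverse E))))"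
    unfolding trm by (rule sums_mult)
  then have "(\<lambda>k. complex_of_real (2 * y / ((real k + 1/2)\<^sup>2 + y\<^sup>2))) sums
       complex_of_real (pi * (E - inverse E) / (E + inverse E))"
    by simp
  then show ?thesis by (simp only: sums_of_real_iff)
qed


lemma kbound:
  fixes a L :: real assumes a: "a > 0"
  shows "\<bar>(a\<^sup>2 - L\<^sup>2) / (a\<^sup>2 + L\<^sup>2)\<^sup>2\<bar> \<le> 1 / a\<^sup>2"
proof -
  have p: "a\<^sup>2 > 0" using a by simp
  have D: "a\<^sup>2 + L\<^sup>2 \<ge> a\<^sup>2" by simp
  have "\<bar>a\<^sup>2 - L\<^sup>2\<bar> \<le> a\<^sup>2 + L\<^sup>2"
    using zero_le_power2[of a] zero_le_power2[of L] by linarith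
  then have "\<bar>(a\<^sup>2 - L\<^sup>2) / (a\<^sup>2 + L\<^sup>2)\<^sup>2\<bar> \<le> (a\<^sup>2 + L\<^sup>2) / (a\<^sup>2 + L\<^sup>2)\<^sup>2"
    using p by (simp add: abs_div divide_right_mono add_pos_nonneg)
  also have "\<dots> = 1 / (a\<^sup>2 + L\<^sup>2)" using p by (simp add: power2_eq_square add_pos_nonneg)
  also have "\<dots> \<le> 1 / a\<^sup>2" using p D by (simp add: frac_le)
  finally show ?thesis .
qed

lemma summable_inv_sq: "summable (\<lambda>j::nat. C / (real (2 * j + 1))\<^sup>2)"
proof -
  have "summable (\<lambda>j::nat. 1 / (real j + 1)\<^sup>2)"
    using inverse_squares_sums by (simp add: sums_iff add.commute)
  then have s: "summable (\<lambda>j::nat. \<bar>C\<bar> * (1 / (real j + 1)\<^sup>2))" by (rule summable_mult)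
  show ?thesis
  proof (rule summable_comparison_test'[OF s])
    fix j :: nat
    have "(real j + 1)\<^sup>2 \<le> (real (2 * j + 1))\<^sup>2" by (intro power_mono) auto
    then have "1 / (real (2 * j + 1))\<^sup>2 \<le> 1 / (real j + 1)\<^sup>2"
      by (intro divide_left_mono) (auto simp: add_pos_nonneg)
    then show "norm (C / (real (2 * j + 1))\<^sup>2) \<le> \<bar>C\<bar> * (1 / (real j + 1)\<^sup>2)"
    proof -
      have "norm (C / (real (2 * j + 1))\<^sup>2) = \<bar>C\<bar> * (1 / (real (2 * j + 1))\<^sup>2)"
        by (simp add: abs_div)
      also have "\<dots> \<le> \<bar>C\<bar> * (1 / (real j + 1)\<^sup>2)"
        using \<open>1 / (real (2 * j + 1))\<^sup>2 \<le> 1 / (real j + 1)\<^sup>2\<close> by (rule mult_left_mono) simp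
      finally show ?thesis .
    qed
  qed
qed


lemma stepD:
  fixes a m :: real assumes a: "a > 0" and m: "m > 0"
  defines "F \<equiv> \<lambda>x::real. (a\<^sup>2 - (ln x)\<^sup>2) * artanh (x powr m) / (x * (a\<^sup>2 + (ln x)\<^sup>2)\<^sup>2)"
  shows "set_integrable lborel {0<..<1} F"
    and "(\<lambda>j. (1 / real (2 * j + 1)) * (LINT x:{0<..<1}|lborel. x powr (real (2 * j + 1) * m - 1) * ((a\<^sup>2 - (ln x)\<^sup>2) / (a\<^sup>2 + (ln x)\<^sup>2)\<^sup>2)))
           sums (LINT x:{0<..<1}|lborel. F x)"
proof -
  define K where "K x = (a\<^sup>2 - (ln x)\<^sup>2) / (x * (a\<^sup>2 + (ln x)\<^sup>2)\<^sup>2)" for x :: real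
  define Q where "Q x = (a\<^sup>2 - (ln x)\<^sup>2) / (a\<^sup>2 + (ln x)\<^sup>2)\<^sup>2" for x :: real
  define c where "c j = real (2 * j + 1) * m" for j :: nat
  define u where "u j x = indicator {0<..<1} x * ((x powr m) ^ (2 * j + 1) / real (2 * j + 1) * K x)" for j x
  have cpos: "c j > 0" for j using m by (simp add: c_def)
  have ueq: "(x powr m) ^ (2 * j + 1) * K x = x powr (c j - 1) * Q x" if x: "x > 0" for x j
  proof -
    have "(x powr m) ^ (2 * j + 1) = x powr (c j)"
      using x powr_power[of x m "2 * j + 1"] by (simp add: c_def)
    moreover have "x powr (c j - 1) = x powr (c j) / x" using x by (simp add: powr_diff)
    ultimately show ?thesis unfolding K_def Q_def by (simp add: field_simps)
  qed
  have u_alt: "u j x = indicator {0<..<1} x * (1 / real (2 * j + 1)) * (x powr (c j - 1) * Q x)" for j x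
    using ueq[of x j] by (cases "x \<in> {0<..<1}") (auto simp: u_def field_simps)
  have um[measurable]: "u j \<in> borel_measurable lborel" for j
    unfolding u_def K_def by measurable
  define g where "g j x = (1 / (a\<^sup>2 * real (2 * j + 1))) * (indicator {0<..<1} x * x powr (c j - 1))" for j x
  have gint: "integrable lborel (g j)" for j
    unfolding g_def using mel_pos(1)[OF cpos[of j]] by (simp add: set_integrable_def)
  have gval: "integral\<^sup>L lborel (g j) = 1 / (a\<^sup>2 * m) / (real (2 * j + 1))\<^sup>2" for j
    unfolding g_def using mel_pos(2)[OF cpos[of j]] m by (simp add: set_lebesgue_integral_def c_def power2_eq_square)
  have ule: "norm (u j x) \<le> g j x" for j x
  proof (cases "x \<in> {0<..<1}")
    case True
    then have x: "x > 0" by simp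
    have "norm (u j x) = (1 / real (2 * j + 1)) * (x powr (c j - 1) * \<bar>Q x\<bar>)"
      using True by (simp add: u_alt abs_mult)
    also have "\<dots> \<le> (1 / real (2 * j + 1)) * (x powr (c j - 1) * (1 / a\<^sup>2))"
      unfolding Q_def by (intro mult_left_mono kbound a) auto
    also have "\<dots> = g j x" using True by (simp add: g_def)
    finally show ?thesis .
  qed (simp add: u_def g_def)
  have uint: "integrable lborel (u j)" for j
    by (rule Bochner_Integration.integrable_bound[OF gint[of j] um]) (use ule[of j] in \<open>auto intro!: AE_I2 intro: order_trans abs_ge_self\<close>)
  have unorm: "(\<integral>x. norm (u j x) \<partial>lborel) \<le> 1 / (a\<^sup>2 * m) / (real (2 * j + 1))\<^sup>2" for j
  proof -
    have "(\<integral>x. norm (u j x) \<partial>lborel) \<le> integral\<^sup>L lborel (g j)"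
      by (intro integral_mono gint ule integrable_norm uint)
    then show ?thesis by (simp add: gval)
  qed
  have sumnorm: "summable (\<lambda>j. \<integral>x. norm (u j x) \<partial>lborel)"
    by (rule summable_comparison_test'[OF summable_inv_sq[of "1 / (a\<^sup>2 * m)"]])
       (use unorm in \<open>auto simp: integral_nonneg_AE\<close>)
  have usums: "(\<lambda>j. u j x) sums (indicator {0<..<1} x * F x)" for x
  proof (cases "x \<in> {0<..<1}")
    case True
    then have x: "x > 0" "x < 1" by auto
    have y: "0 \<le> x powr m" "x powr m < 1" using x m powr_less_mono2[of m x 1] by auto
    have "(\<lambda>j. (x powr m) ^ (2 * j + 1) / real (2 * j + 1) * K x) sums (artanh (x powr m) * K x)"
      by (intro sums_mult2 artanh_series y)
    moreover have "artanh (x powr m) * K x = F x" by (simp add: F_def K_def)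
    ultimately show ?thesis using True by (simp add: u_def)
  qed (simp add: u_def)
  have AEs: "AE x in lborel. summable (\<lambda>j. norm (u j x))"
  proof (rule AE_I2)
    fix x
    show "summable (\<lambda>j. norm (u j x))"
    proof (cases "x \<in> {0<..<1}")
      case True
      then have x: "x > 0" "x < 1" by auto
      have y: "0 \<le> x powr m" "x powr m < 1" using x m powr_less_mono2[of m x 1] by auto
      have "summable (\<lambda>j. (x powr m) ^ (2 * j + 1) / real (2 * j + 1) * \<bar>K x\<bar>)"
        by (intro summable_mult2 sums_summable[OF artanh_series] y)
      moreover have "norm (u j x) = (x powr m) ^ (2 * j + 1) / real (2 * j + 1) * \<bar>K x\<bar>" for j
        using True y by (simp add: u_def abs_mult)
      ultimately show ?thesis by simp
    qed (simp add: u_def)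
  qed
  have I1: "integrable lborel (\<lambda>x. \<Sum>j. u j x)"
    by (rule integrable_suminf[OF uint AEs sumnorm])
  have I2: "(\<lambda>j. integral\<^sup>L lborel (u j)) sums (\<integral>x. (\<Sum>j. u j x) \<partial>lborel)"
    by (rule sums_integral[OF uint AEs sumnorm])
  have sumeq: "(\<lambda>x. \<Sum>j. u j x) = (\<lambda>x. indicator {0<..<1} x * F x)"
    using usums by (auto simp: sums_iff)
  show "set_integrable lborel {0<..<1} F"
    using I1 unfolding sumeq set_integrable_def by simp
  have ival: "integral\<^sup>L lborel (u j) = (1 / real (2 * j + 1)) * (LINT x:{0<..<1}|lborel. x powr (real (2 * j + 1) * m - 1) * ((a\<^sup>2 - (ln x)\<^sup>2) / (a\<^sup>2 + (ln x)\<^sup>2)\<^sup>2))" for j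
  proof -
    have "integral\<^sup>L lborel (u j) = (\<integral>x. (1 / real (2 * j + 1)) * (indicator {0<..<1} x * (x powr (c j - 1) * Q x)) \<partial>lborel)"
      by (rule Bochner_Integration.integral_cong) (simp_all add: u_alt mult_ac)
    then show ?thesis by (simp only: integral_mult_right_zero) (simp add: set_lebesgue_integral_def c_def Q_def)
  qed
  show "(\<lambda>j. (1 / real (2 * j + 1)) * (LINT x:{0<..<1}|lborel. x powr (real (2 * j + 1) * m - 1) * ((a\<^sup>2 - (ln x)\<^sup>2) / (a\<^sup>2 + (ln x)\<^sup>2)\<^sup>2)))
           sums (LINT x:{0<..<1}|lborel. F x)"
    using I2 unfolding sumeq ival by (simp add: set_lebesgue_integral_def)
qed


lemma Tsum:
  fixes s m :: real assumes s: "s > 0" and m: "m > 0"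
  shows "(\<lambda>j. m / ((real (2 * j + 1) * m)\<^sup>2 + s\<^sup>2)) sums
         (pi / (4 * s) * (1 - 2 * (exp (- (pi / m) * s) / (1 + exp (- (pi / m) * s)))))"
proof -
  define y where "y = s / (2 * m)"
  have y: "y > 0" using s m by (simp add: y_def)
  define E where "E = exp (pi * y)"
  have E: "E > 0" by (simp add: E_def)
  have mlf: "(\<lambda>k. 2 * y / ((real k + 1/2)\<^sup>2 + y\<^sup>2)) sums (pi * (E - inverse E) / (E + inverse E))"
    using mittag_complex[OF y] unfolding E_def .
  have "(\<lambda>k. (2 * y / ((real k + 1/2)\<^sup>2 + y\<^sup>2)) * (1 / (4 * s))) sums ((pi * (E - inverse E) / (E + inverse E)) * (1 / (4 * s)))"
    by (rule sums_mult2[OF mlf])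
  moreover have "(2 * y / ((real k + 1/2)\<^sup>2 + y\<^sup>2)) * (1 / (4 * s)) = m / ((real (2 * k + 1) * m)\<^sup>2 + s\<^sup>2)" for k
  proof -
    have p1: "(real k + 1/2)\<^sup>2 + y\<^sup>2 > 0" using y by (simp add: add_pos_nonneg)
    have p2: "(real (2 * k + 1) * m)\<^sup>2 + s\<^sup>2 > 0" using s by (simp add: add_nonneg_pos)
    have "(real (2 * k + 1) * m)\<^sup>2 + s\<^sup>2 = 4 * m\<^sup>2 * ((real k + 1/2)\<^sup>2 + y\<^sup>2)"
      using m by (simp add: y_def field_simps power2_eq_square)
    then show ?thesis using p1 p2 s m by (simp add: y_def field_simps power2_eq_square)
  qed
  moreover have "(pi * (E - inverse E) / (E + inverse E)) * (1 / (4 * s))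
      = pi / (4 * s) * (1 - 2 * (exp (- (pi / m) * s) / (1 + exp (- (pi / m) * s))))"
  proof -
    have q: "exp (- (pi / m) * s) = inverse (E * E)"
      unfolding E_def y_def using m by (simp add: exp_add[symmetric] exp_minus field_simps)
    have "1 + E * E > 0" "E + E * (E * E) > 0" using E by (simp_all add: add_pos_pos)
    moreover have "s * 4 + E * (E * (s * 4)) > 0" "E * (s * 4) + E * (E * (E * (s * 4))) > 0"
      using E s by (simp_all add: add_pos_pos)
    ultimately have "(pi * (E - inverse E) / (E + inverse E)) * (1 / (4 * s)) = pi / (4 * s) * (1 - 2 * (inverse (E * E) / (1 + inverse (E * E))))"
      using E s by (simp add: field_simps)
    then show ?thesis unfolding q .
  qed
  ultimately show ?thesis by simp
qed


lemma stepE: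
  fixes a m :: real assumes a: "a > 0" and m: "m > 0"
  shows "(\<lambda>j. LINT s:{0<..}|lborel. s * exp (- a * s) * (m / ((real (2 * j + 1) * m)\<^sup>2 + s\<^sup>2)))
     sums (LINT s:{0<..}|lborel. pi / 4 * (exp (- a * s) * (1 - 2 * (exp (- (pi / m) * s) / (1 + exp (- (pi / m) * s))))))"
proof -
  define w where "w j s = indicator {0<..} s * (s * exp (- a * s) * (m / ((real (2 * j + 1) * m)\<^sup>2 + s\<^sup>2)))" for j s
  define g where "g j s = (1 / (m * (real (2 * j + 1))\<^sup>2)) * (indicator {0<..} s * (s * exp (- a * s)))" for j s
  have wm[measurable]: "w j \<in> borel_measurable lborel" for j unfolding w_def by measurable
  have gint: "integrable lborel (g j)" for j
    unfolding g_def using lap_pos(1)[OF a] by (simp add: set_integrable_def)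
  have gval: "integral\<^sup>L lborel (g j) = 1 / (a\<^sup>2 * m) / (real (2 * j + 1))\<^sup>2" for j
    unfolding g_def using lap_pos(2)[OF a] by (simp add: set_lebesgue_integral_def)
  have wnn: "w j s \<ge> 0" for j s
    unfolding w_def using m by (auto simp: indicator_def intro!: divide_nonneg_pos add_pos_nonneg mult_nonneg_nonneg)
  have wle: "w j s \<le> g j s" for j s
  proof (cases "s > 0")
    case True
    have cp: "(real (2 * j + 1) * m)\<^sup>2 > 0" using m by simp
    have "m / ((real (2 * j + 1) * m)\<^sup>2 + s\<^sup>2) \<le> m / (real (2 * j + 1) * m)\<^sup>2"
      using m cp by (intro divide_left_mono) (auto intro!: mult_pos_pos add_pos_nonneg)
    also have "\<dots> = 1 / (m * (real (2 * j + 1))\<^sup>2)" using m by (simp add: power2_eq_square)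
    finally have "m / ((real (2 * j + 1) * m)\<^sup>2 + s\<^sup>2) \<le> 1 / (m * (real (2 * j + 1))\<^sup>2)" .
    then have "(s * exp (- a * s)) * (m / ((real (2 * j + 1) * m)\<^sup>2 + s\<^sup>2)) \<le> (s * exp (- a * s)) * (1 / (m * (real (2 * j + 1))\<^sup>2))"
      using True by (intro mult_left_mono) auto
    then show ?thesis using True by (simp add: w_def g_def mult_ac)
  qed (simp add: w_def g_def)
  have wint: "integrable lborel (w j)" for j
    by (rule Bochner_Integration.integrable_bound[OF gint[of j] wm]) (use wle[of j] wnn[of j] in \<open>auto intro!: AE_I2 intro: order_trans[OF _ abs_ge_self]\<close>)
  have wnorm: "(\<integral>s. norm (w j s) \<partial>lborel) \<le> 1 / (a\<^sup>2 * m) / (real (2 * j + 1))\<^sup>2" for j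
  proof -
    have "(\<integral>s. norm (w j s) \<partial>lborel) \<le> integral\<^sup>L lborel (g j)"
      using wle wnn by (intro integral_mono gint integrable_norm wint) auto
    then show ?thesis by (simp add: gval)
  qed
  have sumnorm: "summable (\<lambda>j. \<integral>s. norm (w j s) \<partial>lborel)"
    by (rule summable_comparison_test'[OF summable_inv_sq[of "1 / (a\<^sup>2 * m)"]])
       (use wnorm in \<open>auto simp: integral_nonneg_AE\<close>)
  define H where "H s = pi / 4 * (exp (- a * s) * (1 - 2 * (exp (- (pi / m) * s) / (1 + exp (- (pi / m) * s)))))" for s
  have wsums: "(\<lambda>j. w j s) sums (indicator {0<..} s * H s)" for s
  proof (cases "s > 0")
    case True
    have "(\<lambda>j. (s * exp (- a * s)) * (m / ((real (2 * j + 1) * m)\<^sup>2 + s\<^sup>2))) sums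
        ((s * exp (- a * s)) * (pi / (4 * s) * (1 - 2 * (exp (- (pi / m) * s) / (1 + exp (- (pi / m) * s))))))"
      by (intro sums_mult Tsum True m)
    moreover have "(s * exp (- a * s)) * (pi / (4 * s) * (1 - 2 * (exp (- (pi / m) * s) / (1 + exp (- (pi / m) * s))))) = H s"
      using True by (simp add: H_def field_simps)
    ultimately show ?thesis using True by (simp add: w_def)
  qed (simp add: w_def)
  have AEs: "AE s in lborel. summable (\<lambda>j. norm (w j s))"
    using wsums wnn by (auto intro!: AE_I2 simp: sums_iff)
  have I2: "(\<lambda>j. integral\<^sup>L lborel (w j)) sums (\<integral>s. (\<Sum>j. w j s) \<partial>lborel)"
    by (rule sums_integral[OF wint AEs sumnorm])
  have sumeq: "(\<lambda>s. \<Sum>j. w j s) = (\<lambda>s. indicator {0<..} s * H s)"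
    using wsums by (auto simp: sums_iff)
  have e1: "(\<lambda>j. LINT s:{0<..}|lborel. s * exp (- a * s) * (m / ((real (2 * j + 1) * m)\<^sup>2 + s\<^sup>2)))
      = (\<lambda>j. integral\<^sup>L lborel (w j))"
    unfolding set_lebesgue_integral_def w_def by simp
  have e2: "(LINT s:{0<..}|lborel. pi / 4 * (exp (- a * s) * (1 - 2 * (exp (- (pi / m) * s) / (1 + exp (- (pi / m) * s))))))
      = (\<integral>s. indicator {0<..} s * H s \<partial>lborel)"
    unfolding set_lebesgue_integral_def H_def by simp
  show ?thesis
    using I2 unfolding sumeq e1 e2 .
qed


lemma digamma_diff_sums:
  fixes b :: real assumes b: "b > 0"
  shows "(\<lambda>n. 1 / (real n + (b + 1/2)) - 1 / (real n + (b + 1))) sums (Digamma (b + 1) - Digamma (b + 1/2))"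
proof -
  have z1: "b + 1/2 \<noteq> 0" "b + 1 \<noteq> 0" using b by auto
  have s1: "(\<lambda>k. inverse (of_nat (Suc k)) - inverse ((b + 1/2) + of_nat k)) sums (Digamma (b + 1/2) + euler_mascheroni)"
    using summable_Digamma[OF z1(1)] by (simp add: Digamma_def summable_sums)
  have s2: "(\<lambda>k. inverse (of_nat (Suc k)) - inverse ((b + 1) + of_nat k)) sums (Digamma (b + 1) + euler_mascheroni)"
    using summable_Digamma[OF z1(2)] by (simp add: Digamma_def summable_sums)
  from sums_diff[OF s2 s1] show ?thesis
    by (simp add: inverse_eq_divide add.commute)
qed

lemma geo_q:
  fixes q :: real assumes q: "0 < q" "q < 1"
  shows "(\<lambda>n. q ^ (2 * n + 1) - q ^ (2 * n + 2)) sums (q / (1 + q))"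
proof -
  have q2: "norm (q\<^sup>2) < 1" using q by (simp add: power_less_one_iff abs_less_iff)
  have "(\<lambda>n. (q - q\<^sup>2) * (q\<^sup>2) ^ n) sums ((q - q\<^sup>2) * (1 / (1 - q\<^sup>2)))"
    by (intro sums_mult geometric_sums q2)
  moreover have "(q - q\<^sup>2) * (q\<^sup>2) ^ n = q ^ (2 * n + 1) - q ^ (2 * n + 2)" for n
  proof -
    have "(q\<^sup>2) ^ n = q ^ (2 * n)" by (simp add: power_mult)
    moreover have "q ^ (2 * n + 1) = q * q ^ (2 * n)" "q ^ (2 * n + 2) = q\<^sup>2 * q ^ (2 * n)"
      by (simp_all add: power_add mult.commute power2_eq_square)
    ultimately show ?thesis by (simp add: algebra_simps)
  qed
  moreover have "(q - q\<^sup>2) * (1 / (1 - q\<^sup>2)) = q / (1 + q)"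
  proof -
    have e1: "1 - q\<^sup>2 = (1 - q) * (1 + q)" by (simp add: algebra_simps power2_eq_square)
    have e2: "q - q\<^sup>2 = q * (1 - q)" by (simp add: algebra_simps power2_eq_square)
    have "1 - q \<noteq> 0" "1 + q \<noteq> 0" using q by auto
    then have "(1 - q) * (1 + q) \<noteq> 0" by simp
    then have "(q * (1 - q)) * (1 / ((1 - q) * (1 + q))) = q / (1 + q)"
      by (simp add: divide_simps)
    then show ?thesis unfolding e1 e2 .
  qed
  ultimately show ?thesis by simp
qed


lemma stepF:
  fixes a m :: real assumes a: "a > 0" and m: "m > 0"
  shows "(LINT s:{0<..}|lborel. pi / 4 * (exp (- a * s) * (1 - 2 * (exp (- (pi / m) * s) / (1 + exp (- (pi / m) * s))))))
     = (1/4) * (- m * Digamma (a * m / (2 * pi) + 1) + m * Digamma ((a * m + pi) / (2 * pi)) + pi / a)"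
proof -
  define c where "c = pi / m"
  have c: "c > 0" using m by (simp add: c_def)
  define b1 where "b1 n = a + real (2 * n + 1) * c" for n
  define b2 where "b2 n = a + real (2 * n + 2) * c" for n
  have b1p: "b1 n > 0" for n using a c by (simp add: b1_def add_pos_nonneg)
  have b2p: "b2 n > 0" for n using a c by (simp add: b2_def add_pos_nonneg)
  define v where "v n s = indicator {0<..} s * (exp (- b1 n * s) - exp (- b2 n * s))" for n s
  have vm[measurable]: "v n \<in> borel_measurable lborel" for n unfolding v_def by measurable
  have vint: "integrable lborel (v n)" for n
    using set_integral_diff(1)[OF exp_int(1)[OF b1p[of n]] exp_int(1)[OF b2p[of n]]]
    by (simp add: v_def[abs_def] set_integrable_def)
  have vval: "integral\<^sup>L lborel (v n) = 1 / b1 n - 1 / b2 n" for n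
    using set_integral_diff(2)[OF exp_int(1)[OF b1p[of n]] exp_int(1)[OF b2p[of n]]]
          exp_int(2)[OF b1p[of n]] exp_int(2)[OF b2p[of n]]
    by (simp add: v_def[abs_def] set_lebesgue_integral_def)
  have vnn: "v n s \<ge> 0" for n s
  proof (cases "s > 0")
    case True
    have "b1 n \<le> b2 n" unfolding b1_def b2_def using c by (intro add_left_mono mult_right_mono) auto
    then have "- b2 n * s \<le> - b1 n * s" using True by (intro mult_right_mono) auto
    then show ?thesis using True by (simp add: v_def)
  qed (simp add: v_def)
  have bsum: "(\<lambda>n. 1 / b1 n - 1 / b2 n) sums ((1 / (2 * c)) * (Digamma (a / (2 * c) + 1) - Digamma (a / (2 * c) + 1/2)))"
  proof -
    have "(\<lambda>n. (1 / (2 * c)) * (1 / (real n + (a / (2 * c) + 1/2)) - 1 / (real n + (a / (2 * c) + 1)))) sums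
       ((1 / (2 * c)) * (Digamma (a / (2 * c) + 1) - Digamma (a / (2 * c) + 1/2)))"
      using a c by (intro sums_mult digamma_diff_sums) simp
    moreover have "(1 / (2 * c)) * (1 / (real n + (a / (2 * c) + 1/2)) - 1 / (real n + (a / (2 * c) + 1))) = 1 / b1 n - 1 / b2 n" for n
    proof -
      have "real n + (a / (2 * c) + 1/2) = b1 n / (2 * c)" "real n + (a / (2 * c) + 1) = b2 n / (2 * c)"
        using c by (simp_all add: b1_def b2_def field_simps)
      then show ?thesis using c b1p[of n] b2p[of n] by (simp add: field_simps)
    qed
    ultimately show ?thesis by simp
  qed
  have sumnorm: "summable (\<lambda>n. \<integral>s. norm (v n s) \<partial>lborel)"
  proof -
    have "(\<integral>s. norm (v n s) \<partial>lborel) = 1 / b1 n - 1 / b2 n" for n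
      using vnn vval by simp
    then show ?thesis using bsum by (simp add: sums_iff)
  qed
  define G where "G s = exp (- a * s) * (exp (- (pi / m) * s) / (1 + exp (- (pi / m) * s)))" for s
  have vsums: "(\<lambda>n. v n s) sums (indicator {0<..} s * G s)" for s
  proof (cases "s > 0")
    case True
    define q where "q = exp (- c * s)"
    have q: "0 < q" "q < 1" using True c by (auto simp: q_def)
    have "(\<lambda>n. exp (- a * s) * (q ^ (2 * n + 1) - q ^ (2 * n + 2))) sums (exp (- a * s) * (q / (1 + q)))"
      by (intro sums_mult geo_q q)
    moreover have "exp (- a * s) * (q ^ (2 * n + 1) - q ^ (2 * n + 2)) = v n s" for n
    proof -
      have e: "exp (- (a + real k * c) * s) = exp (- a * s) * q ^ k" for k
        unfolding q_def by (simp add: exp_of_nat_mult[symmetric] exp_add[symmetric] algebra_simps)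
      show ?thesis using True e[of "2 * n + 1"] e[of "2 * n + 2"]
        by (simp add: v_def b1_def b2_def algebra_simps)
    qed
    moreover have "exp (- a * s) * (q / (1 + q)) = G s" by (simp add: G_def q_def c_def)
    ultimately show ?thesis using True by simp
  qed (simp add: v_def)
  have AEs: "AE s in lborel. summable (\<lambda>n. norm (v n s))"
    using vsums vnn by (auto intro!: AE_I2 simp: sums_iff)
  have I1: "integrable lborel (\<lambda>s. \<Sum>n. v n s)"
    by (rule integrable_suminf[OF vint AEs sumnorm])
  have I2: "(\<lambda>n. integral\<^sup>L lborel (v n)) sums (\<integral>s. (\<Sum>n. v n s) \<partial>lborel)"
    by (rule sums_integral[OF vint AEs sumnorm])
  have sumeq: "(\<lambda>s. \<Sum>n. v n s) = (\<lambda>s. indicator {0<..} s * G s)"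
    using vsums by (auto simp: sums_iff)
  have Gint: "set_integrable lborel {0<..} G" using I1 unfolding sumeq set_integrable_def by simp
  have Gval: "(LINT s:{0<..}|lborel. G s) = (1 / (2 * c)) * (Digamma (a / (2 * c) + 1) - Digamma (a / (2 * c) + 1/2))"
  proof -
    have "(\<lambda>n. integral\<^sup>L lborel (v n)) sums (LINT s:{0<..}|lborel. G s)"
      using I2 unfolding sumeq by (simp add: set_lebesgue_integral_def)
    moreover have "(\<lambda>n. integral\<^sup>L lborel (v n)) sums ((1 / (2 * c)) * (Digamma (a / (2 * c) + 1) - Digamma (a / (2 * c) + 1/2)))"
      using bsum by (simp add: vval)
    ultimately show ?thesis by (rule sums_unique2)
  qed
  have "(LINT s:{0<..}|lborel. pi / 4 * (exp (- a * s) * (1 - 2 * (exp (- (pi / m) * s) / (1 + exp (- (pi / m) * s))))))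
      = (LINT s:{0<..}|lborel. pi / 4 * exp (- a * s) - (pi / 2) * G s)"
    by (rule set_lebesgue_integral_cong) (auto simp: G_def algebra_simps)
  also have "\<dots> = pi / 4 * (LINT s:{0<..}|lborel. exp (- a * s)) - (pi / 2) * (LINT s:{0<..}|lborel. G s)"
    using exp_int(1)[OF a] Gint by (simp add: set_integral_diff)
  also have "\<dots> = pi / 4 * (1 / a) - (pi / 2) * ((1 / (2 * c)) * (Digamma (a / (2 * c) + 1) - Digamma (a / (2 * c) + 1/2)))"
    using exp_int(2)[OF a] Gval by simp
  also have "\<dots> = (1/4) * (- m * Digamma (a * m / (2 * pi) + 1) + m * Digamma ((a * m + pi) / (2 * pi)) + pi / a)"
  proof -
    have "a / (2 * c) = a * m / (2 * pi)" using m by (simp add: c_def)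
    moreover have "a * m / (2 * pi) + 1/2 = (a * m + pi) / (2 * pi)" by (simp add: field_simps)
    ultimately show ?thesis using m by (simp add: c_def field_simps)
  qed
  finally show ?thesis .
qed


theorem mainTheorem9:
  fixes a m :: real
  assumes "a > 0" and "m > 0"
  shows "((\<lambda>x::real. (a\<^sup>2 - (ln x)\<^sup>2) * artanh (x powr m) / (x * (a\<^sup>2 + (ln x)\<^sup>2)\<^sup>2))
          has_integral
          (1/4) * (- m * Digamma (a * m / (2 * pi) + 1) + m * Digamma ((a * m + pi) / (2 * pi)) + pi / a))
         {0<..<1}"
proof -
  note a = assms(1) and m = assms(2)
  define F where "F = (\<lambda>x::real. (a\<^sup>2 - (ln x)\<^sup>2) * artanh (x powr m) / (x * (a\<^sup>2 + (ln x)\<^sup>2)\<^sup>2))"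
  have D1: "set_integrable lborel {0<..<1} F" unfolding F_def by (rule stepD(1)[OF a m])
  have D2: "(\<lambda>j. (1 / real (2 * j + 1)) * (LINT x:{0<..<1}|lborel. x powr (real (2 * j + 1) * m - 1) * ((a\<^sup>2 - (ln x)\<^sup>2) / (a\<^sup>2 + (ln x)\<^sup>2)\<^sup>2)))
           sums (LINT x:{0<..<1}|lborel. F x)" unfolding F_def by (rule stepD(2)[OF a m])
  have teq: "(1 / real (2 * j + 1)) * (LINT x:{0<..<1}|lborel. x powr (real (2 * j + 1) * m - 1) * ((a\<^sup>2 - (ln x)\<^sup>2) / (a\<^sup>2 + (ln x)\<^sup>2)\<^sup>2))
      = (LINT s:{0<..}|lborel. s * exp (- a * s) * (m / ((real (2 * j + 1) * m)\<^sup>2 + s\<^sup>2)))" for j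
  proof -
    have c: "real (2 * j + 1) * m > 0" using m by simp
    have "(1 / real (2 * j + 1)) * (LINT x:{0<..<1}|lborel. x powr (real (2 * j + 1) * m - 1) * ((a\<^sup>2 - (ln x)\<^sup>2) / (a\<^sup>2 + (ln x)\<^sup>2)\<^sup>2))
      = (1 / real (2 * j + 1)) * (LINT s:{0<..}|lborel. s * exp (- a * s) * (real (2 * j + 1) * m / ((real (2 * j + 1) * m)\<^sup>2 + s\<^sup>2)))"
      by (simp only: fub[OF a c])
    also have "\<dots> = (LINT s:{0<..}|lborel. (1 / real (2 * j + 1)) * (s * exp (- a * s) * (real (2 * j + 1) * m / ((real (2 * j + 1) * m)\<^sup>2 + s\<^sup>2))))"
      by (rule set_integral_mult_right[symmetric])
    also have "\<dots> = (LINT s:{0<..}|lborel. s * exp (- a * s) * (m / ((real (2 * j + 1) * m)\<^sup>2 + s\<^sup>2)))"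
      by (rule set_lebesgue_integral_cong) auto
    finally show ?thesis .
  qed
  from D2 have "(\<lambda>j. LINT s:{0<..}|lborel. s * exp (- a * s) * (m / ((real (2 * j + 1) * m)\<^sup>2 + s\<^sup>2)))
           sums (LINT x:{0<..<1}|lborel. F x)" unfolding teq .
  from sums_unique2[OF this stepE[OF a m]]
  have val: "(LINT x:{0<..<1}|lborel. F x) = (1/4) * (- m * Digamma (a * m / (2 * pi) + 1) + m * Digamma ((a * m + pi) / (2 * pi)) + pi / a)"
    using stepF[OF a m] by simp
  have "F integrable_on {0<..<1}" "(LINT x:{0<..<1}|lborel. F x) = integral {0<..<1} F"
    using set_borel_integral_eq_integral[OF D1] by auto
  then have "(F has_integral (LINT x:{0<..<1}|lborel. F x)) {0<..<1}"
    by (simp add: has_integral_integral)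
  then have "(F has_integral ((1/4) * (- m * Digamma (a * m / (2 * pi) + 1) + m * Digamma ((a * m + pi) / (2 * pi)) + pi / a))) {0<..<1}"
    by (simp only: val)
  then show ?thesis unfolding F_def .
qed

end
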